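(* Let $n \geq 1$, $z \geq 2$, $\epsilon > 0$, and let $\mathbf{f}_1^{(0)}, \dots, \mathbf{f}_n^{(0)}$ be probability vectors in $\mathbb{R}^z$. For $t \geq 1$ define recursively $$p_{i,j}^{(t)} = \frac{\alpha_i^{(t)}}{\epsilon + D\left(\mathbf{f}_i^{(t-1)}, \mathbf{f}_j^{(t-1)}\right)}, \qquad \mathbf{f}_i^{(t)} = \sum_{j=1}^n p_{i,j}^{(t)} \mathbf{f}_j^{(t-1)},$$ where $\alpha_i^{(t)} > 0$ normalizes so that $\sum_{j} p_{i,j}^{(t)} = 1$ and $D(\mathbf{u}, \mathbf{v}) = \sqrt{\frac{1}{z}\sum_{k=1}^{z} (u_k - v_k)^2}$. Let $R(\mathbf{g}, e) = 2g_e - \sum_{k=1}^z g_k^2$ be the quadratic scoring rule, and for constants $x > 0$ and $y \in \mathbb{R}$ let $R'(\mathbf{g}, e) = x R(\mathbf{g}, e) + y$. Then $R'$ is effective with respect to the weights $\{p_{i,j}^{(t)}\}$ at every time $t \ge 1$; that is, for every $t \ge 1$ and all $i, j, k \in \{1,\dots,n\}$, $$p_{i,j}^{(t)} < p_{i,k}^{(t)} \iff \mathbb{E}_{\mathbf{f}_i^{(t-1)}}\left[R'\left(\mathbf{f}_k^{(t-1)}\right)\right] > \mathbb{E}_{\mathbf{f}_i^{(t-1)}}\left[R'\left(\mathbf{f}_j^{(t-1)}\right)\right].$$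
   Context: For probability vectors $\mathbf{f}, \mathbf{g} \in \mathbb{R}^z$ and a scoring rule $S$, the $\mathbf{f}$-expected score of reporting $\mathbf{g}$ is $\mathbb{E}_{\mathbf{f}}[S(\mathbf{g})] = \sum_{e=1}^z f_e\, S(\mathbf{g}, e)$. *)

theory Defs
  imports Complex_Main
begin

text \<open>Vectors in R^z are represented as functions nat => real, component e for e < z
  (0-based). A family of n vectors is a function nat => nat => real, agent i < n.\<close>

definition prob_vec :: "nat \<Rightarrow> (nat \<Rightarrow> real) \<Rightarrow> bool" where
  "prob_vec z u \<longleftrightarrow> (\<forall>e<z. 0 \<le> u e) \<and> (\<Sum>e<z. u e) = 1"

definition D :: "nat \<Rightarrow> (nat \<Rightarrow> real) \<Rightarrow> (nat \<Rightarrow> real) \<Rightarrow> real" where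
  "D z u v = sqrt ((1 / real z) * (\<Sum>k<z. (u k - v k)^2))"

definition alpha :: "nat \<Rightarrow> nat \<Rightarrow> real \<Rightarrow> (nat \<Rightarrow> nat \<Rightarrow> real) \<Rightarrow> nat \<Rightarrow> real" where
  "alpha n z eps f i = 1 / (\<Sum>j<n. 1 / (eps + D z (f i) (f j)))"

definition weight :: "nat \<Rightarrow> nat \<Rightarrow> real \<Rightarrow> (nat \<Rightarrow> nat \<Rightarrow> real) \<Rightarrow> nat \<Rightarrow> nat \<Rightarrow> real" where
  "weight n z eps f i j = alpha n z eps f i / (eps + D z (f i) (f j))"

definition update :: "nat \<Rightarrow> nat \<Rightarrow> real \<Rightarrow> (nat \<Rightarrow> nat \<Rightarrow> real) \<Rightarrow> nat \<Rightarrow> nat \<Rightarrow> real" where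
  "update n z eps f i e = (\<Sum>j<n. weight n z eps f i j * f j e)"

primrec fseq :: "nat \<Rightarrow> nat \<Rightarrow> real \<Rightarrow> (nat \<Rightarrow> nat \<Rightarrow> real) \<Rightarrow> nat \<Rightarrow> nat \<Rightarrow> nat \<Rightarrow> real" where
  "fseq n z eps f0 0 = f0"
| "fseq n z eps f0 (Suc t) = update n z eps (fseq n z eps f0 t)"

definition p :: "nat \<Rightarrow> nat \<Rightarrow> real \<Rightarrow> (nat \<Rightarrow> nat \<Rightarrow> real) \<Rightarrow> nat \<Rightarrow> nat \<Rightarrow> nat \<Rightarrow> real" where
  "p n z eps f0 t i j = weight n z eps (fseq n z eps f0 (t - 1)) i j"

definition expected_score :: "nat \<Rightarrow> (nat \<Rightarrow> real) \<Rightarrow> ((nat \<Rightarrow> real) \<Rightarrow> nat \<Rightarrow> real) \<Rightarrow> (nat \<Rightarrow> real) \<Rightarrow> real" where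
  "expected_score z f S g = (\<Sum>e<z. f e * S g e)"

definition quad_rule :: "nat \<Rightarrow> (nat \<Rightarrow> real) \<Rightarrow> nat \<Rightarrow> real" where
  "quad_rule z g e = 2 * g e - (\<Sum>k<z. (g k)^2)"

end

theory Submission
  imports Defs
begin

lemma D_pos: "eps > 0 \<Longrightarrow> eps + D z u v > 0"
  unfolding D_def by (smt (verit) real_sqrt_ge_zero divide_nonneg_nonneg mult_nonneg_nonneg sum_nonneg zero_le_power2 of_nat_0_le_iff)

lemma weight_sum:
  assumes "eps > 0" "n \<ge> 1" "i < n"
  shows "(\<Sum>j<n. weight n z eps f i j) = 1"
proof -
  have pos: "(\<Sum>j<n. 1 / (eps + D z (f i) (f j))) > 0"
    using assms by (intro sum_pos) (auto intro: D_pos)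
  have "(\<Sum>j<n. weight n z eps f i j) = alpha n z eps f i * (\<Sum>j<n. 1 / (eps + D z (f i) (f j)))"
    unfolding weight_def sum_distrib_left by simp
  thus ?thesis using pos unfolding alpha_def by simp
qed

lemma fseq_sum:
  assumes "eps > 0" "n \<ge> 1" "\<forall>i<n. prob_vec z (f0 i)"
  shows "i < n \<Longrightarrow> (\<Sum>e<z. fseq n z eps f0 t i e) = 1"
proof (induction t arbitrary: i)
  case 0 thus ?case using assms by (simp add: prob_vec_def)
next
  case (Suc t)
  have "(\<Sum>e<z. fseq n z eps f0 (Suc t) i e)
      = (\<Sum>j<n. weight n z eps (fseq n z eps f0 t) i j * (\<Sum>e<z. fseq n z eps f0 t j e))"
    by (simp add: update_def sum.swap[of _ "{..<z}"] sum_distrib_left)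
  also have "\<dots> = (\<Sum>j<n. weight n z eps (fseq n z eps f0 t) i j)"
    using Suc.IH by simp
  also have "\<dots> = 1" using weight_sum assms Suc.prems by blast
  finally show ?case .
qed

lemma weight_lt:
  assumes "eps > 0" "n \<ge> 1" "i < n"
  shows "weight n z eps f i j < weight n z eps f i k \<longleftrightarrow> D z (f i) (f k) < D z (f i) (f j)"
proof -
  have pos: "(\<Sum>j<n. 1 / (eps + D z (f i) (f j))) > 0"
    using assms by (intro sum_pos) (auto intro: D_pos)
  hence a: "alpha n z eps f i > 0" unfolding alpha_def by simp
  have dj: "eps + D z (f i) (f j) > 0" and dk: "eps + D z (f i) (f k) > 0" using assms D_pos by auto
  have "weight n z eps f i j < weight n z eps f i k \<longleftrightarrow>
     alpha n z eps f i / (eps + D z (f i) (f j)) < alpha n z eps f i / (eps + D z (f i) (f k))"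
    unfolding weight_def by simp
  also have "\<dots> \<longleftrightarrow> eps + D z (f i) (f k) < eps + D z (f i) (f j)"
    proof
    assume h: "alpha n z eps f i / (eps + D z (f i) (f j)) < alpha n z eps f i / (eps + D z (f i) (f k))"
    show "eps + D z (f i) (f k) < eps + D z (f i) (f j)"
    proof (rule ccontr)
      assume "\<not> ?thesis"
      hence "alpha n z eps f i / (eps + D z (f i) (f j)) \<ge> alpha n z eps f i / (eps + D z (f i) (f k))"
        using a dk dj by (intro divide_left_mono) auto
      thus False using h by simp
    qed
  next
    assume "eps + D z (f i) (f k) < eps + D z (f i) (f j)"
    thus "alpha n z eps f i / (eps + D z (f i) (f j)) < alpha n z eps f i / (eps + D z (f i) (f k))"
      using a dk by (intro divide_strict_left_mono) auto
  qed
  finally show ?thesis by simp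
qed

lemma D_lt:
  assumes "z > 0"
  shows "D z u v < D z u w \<longleftrightarrow> (\<Sum>k<z. (u k - v k)^2) < (\<Sum>k<z. (u k - w k)^2)"
  unfolding D_def using assms by (simp add: divide_less_cancel)

lemma es:
  assumes "(\<Sum>e<z. f e) = 1"
  shows "expected_score z f (\<lambda>g e. x * quad_rule z g e + y) g
     = x * ((\<Sum>e<z. (f e)^2) - (\<Sum>e<z. (f e - g e)^2)) + y"
proof -
  have "expected_score z f (\<lambda>g e. x * quad_rule z g e + y) g
     = 2 * x * (\<Sum>e<z. f e * g e) - x * (\<Sum>k<z. (g k)^2) * (\<Sum>e<z. f e) + y * (\<Sum>e<z. f e)"
    unfolding expected_score_def quad_rule_def
    by (simp add: algebra_simps sum.distrib sum_distrib_left sum_distrib_right sum_subtractf)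
      (rule sum.swap)
  also have "\<dots> = 2 * x * (\<Sum>e<z. f e * g e) - x * (\<Sum>k<z. (g k)^2) + y" using assms by simp
  finally have h1: "expected_score z f (\<lambda>g e. x * quad_rule z g e + y) g = 2 * x * (\<Sum>e<z. f e * g e) - x * (\<Sum>k<z. (g k)^2) + y" .
  have h2: "(\<Sum>e<z. (f e - g e)^2) = (\<Sum>e<z. (f e)^2) - 2 * (\<Sum>e<z. f e * g e) + (\<Sum>k<z. (g k)^2)"
    by (simp add: power2_diff sum.distrib sum_subtractf sum_distrib_left algebra_simps)
  have alg: "\<And>F P G::real. 2*x*P - x*G + y = x*(F-(F-2*P+G)) + y" by (simp add: algebra_simps)
  show ?thesis unfolding h1 h2 by (rule alg)
qed

theorem corollary2:
  fixes n z :: nat and eps x y :: real and f0 :: "nat \<Rightarrow> nat \<Rightarrow> real"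
  assumes "n \<ge> 1" and "z \<ge> 2" and "eps > 0"
    and "\<forall>i<n. prob_vec z (f0 i)"
    and "x > 0"
  shows "\<forall>t\<ge>1. \<forall>i<n. \<forall>j<n. \<forall>k<n.
    (p n z eps f0 t i j < p n z eps f0 t i k \<longleftrightarrow>
      expected_score z (fseq n z eps f0 (t - 1) i) (\<lambda>g e. x * quad_rule z g e + y) (fseq n z eps f0 (t - 1) k)
      > expected_score z (fseq n z eps f0 (t - 1) i) (\<lambda>g e. x * quad_rule z g e + y) (fseq n z eps f0 (t - 1) j))"
proof (intro allI impI)
  fix t :: nat and i j k assume "1 \<le> t" and i: "i < n" and "j < n" "k < n"
  define f where "f = fseq n z eps f0 (t - 1)"
  have s: "(\<Sum>e<z. f i e) = 1" unfolding f_def using fseq_sum assms i by blast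
  have "p n z eps f0 t i j < p n z eps f0 t i k \<longleftrightarrow> D z (f i) (f k) < D z (f i) (f j)"
    unfolding p_def f_def using weight_lt assms i by blast
  also have "\<dots> \<longleftrightarrow> (\<Sum>e<z. (f i e - f k e)^2) < (\<Sum>e<z. (f i e - f j e)^2)"
    using D_lt assms(2) by simp
  also have "\<dots> \<longleftrightarrow> expected_score z (f i) (\<lambda>g e. x * quad_rule z g e + y) (f k)
      > expected_score z (f i) (\<lambda>g e. x * quad_rule z g e + y) (f j)"
    unfolding es[OF s] using assms(5) by simp
  finally show "p n z eps f0 t i j < p n z eps f0 t i k \<longleftrightarrow>
      expected_score z (fseq n z eps f0 (t - 1) i) (\<lambda>g e. x * quad_rule z g e + y) (fseq n z eps f0 (t - 1) k)
      > expected_score z (fseq n z eps f0 (t - 1) i) (\<lambda>g e. x * quad_rule z g e + y) (fseq n z eps f0 (t - 1) j)"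
    unfolding f_def .
qed

end
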